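(* Let $f$ be a multiplicative function from the positive integers to the nonnegative integers with $f(p^{k-1})\le f(p^k)$ for all primes $p$ and integers $k\ge1$. A squarefree positive integer is $f$-practical if and only if it is weakly $f$-practical.
   Context: $f$ multiplicative means $f(1)=1$ and $f(ab)=f(a)f(b)$ for coprime $a,b$. $S_f(n)=\sum_{d\mid n} f(d)$. A positive integer $n$ is $f$-practical if every positive integer $m\le S_f(n)$ equals $\sum_{d\in\mathcal{D}}f(d)$ for some set $\mathcal{D}$ of distinct divisors of $n$. Write $n=p_1^{e_1}\cdots p_k^{e_k}$ with distinct primes ordered so that $f(p_1)\le\cdots\le f(p_k)$, and let $m_i=\prod_{j=1}^{i}p_j^{e_j}$ for $0\le i<k$ ($m_0=1$). Then $n$ is weakly $f$-practical if $f(p_{i+1})\le S_f(m_i)+1$ for every $0\le i<k$. *)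

theory Defs
  imports "HOL-Computational_Algebra.Computational_Algebra"
begin

definition multiplicative_fn :: "(nat \<Rightarrow> nat) \<Rightarrow> bool" where
  "multiplicative_fn f \<longleftrightarrow> f 1 = 1 \<and>
     (\<forall>a b. 0 < a \<longrightarrow> 0 < b \<longrightarrow> coprime a b \<longrightarrow> f (a * b) = f a * f b)"

definition S_f :: "(nat \<Rightarrow> nat) \<Rightarrow> nat \<Rightarrow> nat" where
  "S_f f n = (\<Sum>d\<in>{d. d dvd n}. f d)"

definition f_practical :: "(nat \<Rightarrow> nat) \<Rightarrow> nat \<Rightarrow> bool" where
  "f_practical f n \<longleftrightarrow> 0 < n \<and>
     (\<forall>m. 1 \<le> m \<and> m \<le> S_f f n \<longrightarrow>
        (\<exists>D. D \<subseteq> {d. d dvd n} \<and> m = (\<Sum>d\<in>D. f d)))"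

definition f_prime_ordering :: "(nat \<Rightarrow> nat) \<Rightarrow> nat \<Rightarrow> nat list \<Rightarrow> bool" where
  "f_prime_ordering f n ps \<longleftrightarrow> distinct ps \<and> set ps = prime_factors n \<and> sorted (map f ps)"

text \<open>m_i = prod_{j<i} p_j^{e_j} (with 0-indexed list, m_0 = 1).\<close>
definition m_part :: "nat \<Rightarrow> nat list \<Rightarrow> nat \<Rightarrow> nat" where
  "m_part n ps i = (\<Prod>j<i. (ps ! j) ^ multiplicity (ps ! j) n)"

definition weakly_f_practical :: "(nat \<Rightarrow> nat) \<Rightarrow> nat \<Rightarrow> bool" where
  "weakly_f_practical f n \<longleftrightarrow> 0 < n \<and>
     (\<forall>ps. f_prime_ordering f n ps \<longrightarrow>
        (\<forall>i < length ps. f (ps ! i) \<le> S_f f (m_part n ps i) + 1))"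

end

theory Submission
  imports Defs
begin

lemma fpow_pos:
  fixes f :: "nat \<Rightarrow> nat"
  assumes mon: "\<And>p k. prime p \<Longrightarrow> 1 \<le> k \<Longrightarrow> f (p ^ (k - 1)) \<le> f (p ^ k)"
    and f1: "f 1 = 1" and p: "prime (p::nat)"
  shows "1 \<le> f (p ^ k)"
proof (induction k)
  case 0 then show ?case using f1 by simp
next
  case (Suc k)
  have "f (p ^ k) \<le> f (p ^ Suc k)" using mon[OF p, of "Suc k"] by simp
  with Suc show ?case by simp
qed

lemma mult_mf:
  assumes "multiplicative_fn f"
  shows "f 1 = 1" "\<And>a b. 0 < a \<Longrightarrow> 0 < b \<Longrightarrow> coprime a b \<Longrightarrow> f (a * b) = f a * f b"
  using assms unfolding multiplicative_fn_def by blast+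

lemma f_pos:
  assumes mult: "multiplicative_fn f"
    and mon: "\<And>p k. prime p \<Longrightarrow> 1 \<le> k \<Longrightarrow> f (p ^ (k - 1)) \<le> f (p ^ k)"
  shows "(e::nat) > 0 \<Longrightarrow> 1 \<le> f e"
proof (induction e rule: less_induct)
  case (less e)
  note f1 = mult_mf(1)[OF mult]
  show ?case
  proof (cases "e = 1")
    case True with f1 show ?thesis by simp
  next
    case False
    then obtain p where p: "prime p" "p dvd e" using prime_factor_nat by blast
    have e0: "e \<noteq> 0" using less.prems by simp
    have pu: "\<not> is_unit p" using p(1) not_prime_unit by blast
    obtain y where y: "e = p ^ multiplicity p e * y" "\<not> p dvd y"
      using multiplicity_decompose'[OF e0 pu] by blast
    have k: "multiplicity p e \<ge> 1"
      using p e0 by (metis dvd_imp_multiplicity_le multiplicity_prime nless_le prime_imp_prime_elem)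
    have y0: "y > 0" using y less.prems by (cases "y = 0") auto
    have "p ^ 1 \<le> p ^ multiplicity p e"
      using k p by (intro power_increasing) (auto simp: prime_gt_0_nat Suc_le_eq)
    then have q2: "p ^ multiplicity p e \<ge> 2" using prime_ge_2_nat[OF p(1)] by simp
    have "2 * y \<le> p ^ multiplicity p e * y" using q2 by (rule mult_le_mono1)
    then have ylt: "y < e" using y(1) y0 by linarith
    have cop: "coprime (p ^ multiplicity p e) y"
      using p y by (simp add: prime_imp_coprime)
    have pk0: "0 < p ^ multiplicity p e" using q2 by linarith
    have "f e = f (p ^ multiplicity p e) * f y"
      using mult_mf(2)[OF mult pk0 y0 cop] y(1) by simp
    moreover have "1 \<le> f (p ^ multiplicity p e)" using fpow_pos[OF mon f1 p(1)] by blast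
    moreover have "1 \<le> f y" using less.IH[OF ylt y0] .
    ultimately show ?thesis by (simp add: one_le_mult_iff)
  qed
qed

lemma f_le:
  assumes mult: "multiplicative_fn f"
    and mon: "\<And>p k. prime p \<Longrightarrow> 1 \<le> k \<Longrightarrow> f (p ^ (k - 1)) \<le> f (p ^ k)"
    and d: "(d::nat) > 0" "squarefree d" and q: "prime q" "q dvd d"
  shows "f q \<le> f d"
proof -
  obtain e where e: "d = q * e" using q by blast
  have e0: "e > 0" using e d by (cases "e = 0") auto
  have "\<not> q dvd e"
  proof
    assume "q dvd e"
    then have "q ^ 2 dvd d" using e by (auto simp: power2_eq_square)
    then have "q dvd 1" using d squarefreeD by blast
    with q show False by simp
  qed
  then have "coprime q e" using q by (simp add: prime_imp_coprime)
  then have "f d = f q * f e" using mult e e0 q unfolding multiplicative_fn_def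
    by (simp add: prime_gt_0_nat)
  moreover have "1 \<le> f e" using f_pos[OF mult mon e0] .
  ultimately show ?thesis by simp
qed

lemma sqf_dvd:
  assumes "squarefree (d::nat)" "d > 0" "M > 0" "\<And>q. prime q \<Longrightarrow> q dvd d \<Longrightarrow> q dvd M"
  shows "d dvd M"
proof (rule multiplicity_le_imp_dvd)
  show "d \<noteq> 0" using assms by simp
  fix q :: nat assume q: "prime q"
  have le1: "multiplicity q d \<le> 1" using assms(1,2) q squarefree_factorial_semiring'' by auto
  show "multiplicity q d \<le> multiplicity q M"
  proof (cases "q dvd d")
    case True
    then have "q dvd M" using assms(4) q by blast
    then have "multiplicity q M \<ge> 1" using q assms(3)
      by (metis dvd_imp_le multiplicity_gt_zero_iff not_gr0 not_prime_unit one_dvd)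
    with le1 show ?thesis by linarith
  next
    case False
    then show ?thesis by (simp add: not_dvd_imp_multiplicity_0)
  qed
qed

lemma divs_mult_prime:
  assumes "0 < (m::nat)" "prime p" "\<not> p dvd m"
  shows "{d. d dvd m * p} = {d. d dvd m} \<union> (\<lambda>d. p * d) ` {d. d dvd m}"
proof (intro equalityI subsetI)
  fix d assume "d \<in> {d. d dvd m * p}"
  then have d: "d dvd m * p" by simp
  show "d \<in> {d. d dvd m} \<union> (\<lambda>d. p * d) ` {d. d dvd m}"
  proof (cases "p dvd d")
    case True
    then obtain e where e: "d = p * e" by blast
    then have "e dvd m" using d assms(2) by (simp add: mult.commute prime_gt_0_nat)
    then show ?thesis using e by blast
  next
    case False
    then have "coprime d p" using assms(2) prime_imp_coprime coprime_commute by blast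
    then have "d dvd m" using d coprime_dvd_mult_left_iff by blast
    then show ?thesis by simp
  qed
qed auto

lemma sum_split:
  assumes mult: "multiplicative_fn f" and m: "0 < (m::nat)" and p: "prime p" "\<not> p dvd m"
    and D: "D1 \<subseteq> {d. d dvd m}" "D2 \<subseteq> {d. d dvd m}"
  shows "sum f (D1 \<union> (\<lambda>d. p * d) ` D2) = sum f D1 + f p * sum f D2"
proof -
  have fin: "finite D1" "finite D2" using D m finite_divisors_nat finite_subset by blast+
  have disj: "D1 \<inter> (\<lambda>d. p * d) ` D2 = {}"
  proof (rule ccontr)
    assume "D1 \<inter> (\<lambda>d. p * d) ` D2 \<noteq> {}"
    then obtain e where "p * e dvd m" using D by blast
    then have "p dvd m" using dvd_mult_left by blast
    with p show False by simp
  qed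
  have inj: "inj_on (\<lambda>d. p * d) D2" using p by (simp add: inj_on_def prime_gt_0_nat)
  have "sum f (D1 \<union> (\<lambda>d. p * d) ` D2) = sum f D1 + sum f ((\<lambda>d. p * d) ` D2)"
    using fin disj by (simp add: sum.union_disjoint)
  also have "sum f ((\<lambda>d. p * d) ` D2) = sum (\<lambda>d. f (p * d)) D2"
    using inj by (simp add: sum.reindex)
  also have "\<dots> = sum (\<lambda>d. f p * f d) D2"
  proof (rule sum.cong)
    fix d assume "d \<in> D2"
    then have dm: "d dvd m" using D by blast
    then have "\<not> p dvd d" using p dvd_trans by blast
    then have "coprime p d" using p prime_imp_coprime by blast
    moreover have "d > 0" using dm m by (cases "d = 0") auto
    ultimately show "f (p * d) = f p * f d" using mult p unfolding multiplicative_fn_def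
      by (simp add: prime_gt_0_nat)
  qed simp
  also have "\<dots> = f p * sum f D2" by (simp add: sum_distrib_left)
  finally show ?thesis .
qed

lemma S_mult:
  assumes mult: "multiplicative_fn f" and m: "0 < (m::nat)" and p: "prime p" "\<not> p dvd m"
  shows "S_f f (m * p) = S_f f m + f p * S_f f m"
  unfolding S_f_def divs_mult_prime[OF m p]
  using sum_split[OF mult m p, of "{d. d dvd m}" "{d. d dvd m}"] by simp

lemma step:
  assumes mult: "multiplicative_fn f" and m: "0 < (m::nat)" and p: "prime p" "\<not> p dvd m"
    and fp: "1 \<le> f p" "f p \<le> S_f f m + 1"
    and IH: "\<forall>s \<le> S_f f m. \<exists>D \<subseteq> {d. d dvd m}. s = sum f D"
  shows "\<forall>s \<le> S_f f (m * p). \<exists>D \<subseteq> {d. d dvd m * p}. s = sum f D"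
proof (intro allI impI)
  fix s assume s: "s \<le> S_f f (m * p)"
  define a where "a = min (S_f f m) (s div f p)"
  define b where "b = s - f p * a"
  have a: "a \<le> S_f f m" unfolding a_def by simp
  have fa: "f p * a \<le> s"
  proof -
    have "f p * a \<le> f p * (s div f p)" unfolding a_def by simp
    also have "\<dots> \<le> s" by simp
    finally show ?thesis .
  qed
  have b: "b \<le> S_f f m"
  proof (cases "s div f p \<le> S_f f m")
    case True
    then have "a = s div f p" unfolding a_def by simp
    then have "b = s mod f p" unfolding b_def by (simp add: minus_mult_div_eq_mod)
    also have "\<dots> < f p" using fp by simp
    finally show ?thesis using fp by linarith
  next
    case False
    then have "a = S_f f m" unfolding a_def by simp
    then show ?thesis using s S_mult[OF mult m p] unfolding b_def by simp
  qed
  obtain D1 where D1: "D1 \<subseteq> {d. d dvd m}" "b = sum f D1" using IH b by blast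
  obtain D2 where D2: "D2 \<subseteq> {d. d dvd m}" "a = sum f D2" using IH a by blast
  have "s = sum f (D1 \<union> (\<lambda>d. p * d) ` D2)"
    using sum_split[OF mult m p D1(1) D2(1)] D1 D2 fa unfolding b_def by simp
  moreover have "D1 \<union> (\<lambda>d. p * d) ` D2 \<subseteq> {d. d dvd m * p}"
    using divs_mult_prime[OF m p] D1 D2 by blast
  ultimately show "\<exists>D \<subseteq> {d. d dvd m * p}. s = sum f D" by blast
qed


theorem corollary2p6:
  fixes f :: "nat \<Rightarrow> nat" and n :: nat
  assumes "multiplicative_fn f"
    and "\<And>p k. prime p \<Longrightarrow> 1 \<le> k \<Longrightarrow> f (p ^ (k - 1)) \<le> f (p ^ k)"
    and "0 < n" and "squarefree n"
  shows "f_practical f n \<longleftrightarrow> weakly_f_practical f n"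
proof -
  note mult = assms(1) and mon = assms(2) and n0 = assms(3) and sqf = assms(4)
  have mp: "m_part n ps i = (\<Prod>j<i. ps ! j)"
    if ord: "f_prime_ordering f n ps" and i: "i \<le> length ps" for ps i
  proof -
    have "ps ! j ^ multiplicity (ps ! j) n = ps ! j" if "j < i" for j
    proof -
      have "ps ! j \<in> prime_factors n" using ord that i unfolding f_prime_ordering_def
        by (metis nth_mem order_less_le_trans)
      then have "multiplicity (ps ! j) n = 1" using sqf n0 squarefree_factorial_semiring' by auto
      then show ?thesis by simp
    qed
    then show ?thesis unfolding m_part_def by (intro prod.cong) auto
  qed
  have prm: "prime (ps ! j)" "ps ! j dvd n"
    if ord: "f_prime_ordering f n ps" and j: "j < length ps" for ps j
  proof -
    have "ps ! j \<in> prime_factors n" using ord j unfolding f_prime_ordering_def by (metis nth_mem)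
    then show "prime (ps ! j)" "ps ! j dvd n" by auto
  qed
  show ?thesis
  proof
    assume prac: "f_practical f n"
    show "weakly_f_practical f n"
      unfolding weakly_f_practical_def
    proof (intro conjI allI impI n0)
      fix ps i assume ord: "f_prime_ordering f n ps" and i: "i < length ps"
      define M where "M = (\<Prod>j<i. ps ! j)"
      have M: "m_part n ps i = M" using mp[OF ord] i unfolding M_def by simp
      have M0: "M > 0" unfolding M_def using prm[OF ord] i
        by (intro prod_pos) (auto simp: prime_gt_0_nat)
      show "f (ps ! i) \<le> S_f f (m_part n ps i) + 1"
      proof (rule ccontr)
        assume "\<not> f (ps ! i) \<le> S_f f (m_part n ps i) + 1"
        then have big: "f (ps ! i) > S_f f M + 1" using M by simp
        have "f (ps ! i) \<le> S_f f n" unfolding S_f_def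
          using prm(2)[OF ord i] n0 by (intro member_le_sum) auto
        then have "S_f f M + 1 \<le> S_f f n" using big by simp
        then obtain D where D: "D \<subseteq> {d. d dvd n}" "S_f f M + 1 = sum f D"
          using prac unfolding f_practical_def by auto
        have finD: "finite D" using D(1) n0 finite_divisors_nat finite_subset by blast
        have "D \<subseteq> {d. d dvd M}"
        proof
          fix d assume dD: "d \<in> D"
          then have dn: "d dvd n" using D by blast
          then have d0: "d > 0" using n0 by (cases "d = 0") auto
          have sd: "squarefree d" using squarefree_mono[OF dn sqf] .
          have fd: "f d \<le> S_f f M + 1" using D(2) member_le_sum[OF dD _ finD, of f] by simp
          have "d dvd M"
          proof (rule sqf_dvd[OF sd d0 M0])
            fix q assume q: "prime q" "q dvd d"
            have "q dvd n" using q(2) dn dvd_trans by blast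
            then have "q \<in> prime_factors n" using q(1) n0 by (simp add: in_prime_factors_iff)
            then obtain j where j: "j < length ps" "q = ps ! j"
              using ord unfolding f_prime_ordering_def by (metis in_set_conv_nth)
            have "f q \<le> f d" using f_le[OF mult mon d0 sd q] .
            have "j < i"
            proof (rule ccontr)
              assume "\<not> j < i"
              then have "f (ps ! i) \<le> f (ps ! j)"
                using sorted_nth_mono[of "map f ps" i j] ord j unfolding f_prime_ordering_def by simp
              with \<open>f q \<le> f d\<close> fd big j show False by simp
            qed
            then show "q dvd M" unfolding M_def using j dvd_prodI[of "{..<i}" j "(!) ps"] by simp
          qed
          then show "d \<in> {d. d dvd M}" by simp
        qed
        then have "sum f D \<le> S_f f M" unfolding S_f_def
          using M0 by (intro sum_mono2) auto
        with D(2) show False by simp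
      qed
    qed
  next
    assume weak: "weakly_f_practical f n"
    define ps where "ps = sort_key f (sorted_list_of_set (prime_factors n))"
    have ord: "f_prime_ordering f n ps" unfolding ps_def f_prime_ordering_def by simp
    define P where "P i = (\<Prod>j<i. ps ! j)" for i
    have cond: "f (ps ! i) \<le> S_f f (P i) + 1" if "i < length ps" for i
    proof -
      have "f (ps ! i) \<le> S_f f (m_part n ps i) + 1"
        using weak ord that unfolding weakly_f_practical_def by blast
      then show ?thesis using mp[OF ord, of i] that unfolding P_def by simp
    qed
    have main: "P i > 0 \<and> P i dvd n \<and> (\<forall>s \<le> S_f f (P i). \<exists>D \<subseteq> {d. d dvd P i}. s = sum f D)"
      if "i \<le> length ps" for i
      using that
    proof (induction i)
      case 0
      have P0: "P 0 = 1" unfolding P_def by simp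
      have S1: "S_f f 1 = 1" unfolding S_f_def using mult_mf(1)[OF mult] by simp
      have "\<exists>D \<subseteq> {d. d dvd 1}. s = sum f D" if "s \<le> 1" for s :: nat
      proof (cases "s = 0")
        case True then show ?thesis by (intro exI[of _ "{}"]) auto
      next
        case False then have "s = 1" using that by simp
        then show ?thesis using mult_mf(1)[OF mult] by (intro exI[of _ "{1}"]) auto
      qed
      then show ?case using P0 S1 by simp
    next
      case (Suc i)
      then have IH: "P i > 0" "P i dvd n" "\<forall>s \<le> S_f f (P i). \<exists>D \<subseteq> {d. d dvd P i}. s = sum f D"
        and i: "i < length ps" by auto
      have PS: "P (Suc i) = P i * ps ! i" unfolding P_def by simp
      have p: "prime (ps ! i)" "ps ! i dvd n" using prm[OF ord i] by auto
      have nd: "\<not> ps ! i dvd P i"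
      proof
        assume "ps ! i dvd P i"
        then have "\<exists>j\<in>{..<i}. ps ! i dvd ps ! j" unfolding P_def
          using p(1) prime_dvd_prod_iff[of "{..<i}" "ps ! i" "(!) ps"] by simp
        then obtain j where j: "j < i" "ps ! i dvd ps ! j" by blast
        have "prime (ps ! j)" using prm[OF ord] j i by simp
        then have "ps ! i = ps ! j" using p(1) j(2) primes_dvd_imp_eq by blast
        moreover have "distinct ps" using ord unfolding f_prime_ordering_def by simp
        ultimately show False using j i nth_eq_iff_index_eq by fastforce
      qed
      have fp1: "1 \<le> f (ps ! i)" using f_pos[OF mult mon] p(1) prime_gt_0_nat by blast
      have c: "coprime (P i) (ps ! i)" using nd p(1) prime_imp_coprime coprime_commute by blast
      have "P (Suc i) > 0" using PS IH(1) p(1) prime_gt_0_nat by simp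
      moreover have "P (Suc i) dvd n" using PS divides_mult[OF IH(2) p(2) c] by simp
      moreover have "\<forall>s \<le> S_f f (P (Suc i)). \<exists>D \<subseteq> {d. d dvd P (Suc i)}. s = sum f D"
        using step[OF mult IH(1) p(1) nd fp1 cond[OF i] IH(3)] PS by simp
      ultimately show ?case by blast
    qed
    have L: "P (length ps) > 0" "P (length ps) dvd n"
      and C: "\<forall>s \<le> S_f f (P (length ps)). \<exists>D \<subseteq> {d. d dvd P (length ps)}. s = sum f D"
      using main[of "length ps"] by auto
    have "n dvd P (length ps)"
    proof (rule sqf_dvd[OF sqf n0 L(1)])
      fix q assume q: "prime q" "q dvd n"
      then have "q \<in> prime_factors n" using n0 by (simp add: in_prime_factors_iff)
      then have "q \<in> set ps" using ord unfolding f_prime_ordering_def by simp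
      then obtain j where j: "j < length ps" "q = ps ! j" by (metis in_set_conv_nth)
      then show "q dvd P (length ps)" unfolding P_def using dvd_prodI[of "{..<length ps}" j "(!) ps"] by simp
    qed
    then have nP: "n = P (length ps)" using L(2) dvd_antisym by blast
    show "f_practical f n" unfolding f_practical_def using n0 C nP by auto
  qed
qed

end
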